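(* For all $n\ge 0$, the quadruples of statistics $(\operatorname{asc},\operatorname{des},\operatorname{MNA},\operatorname{MND})$ and $(\operatorname{des},\operatorname{asc},\operatorname{MND},\operatorname{MNA})$ are equidistributed on $S_n(213,312)$, i.e. $$\sum_{\pi\in S_n(213,312)} t_1^{\operatorname{asc}(\pi)}t_2^{\operatorname{des}(\pi)}t_3^{\operatorname{MNA}(\pi)}t_4^{\operatorname{MND}(\pi)}=\sum_{\pi\in S_n(213,312)} t_1^{\operatorname{des}(\pi)}t_2^{\operatorname{asc}(\pi)}t_3^{\operatorname{MND}(\pi)}t_4^{\operatorname{MNA}(\pi)}.$$
   Context: For $n\ge 0$, $S_n$ denotes the set of permutations $\pi=\pi_1\cdots\pi_n$ of $[n]=\{1,\dots,n\}$. $\pi$ avoids a pattern $\tau\in S_k$ if no subsequence $\pi_{i_1}\cdots\pi_{i_k}$ ($i_1<\dots<i_k$) satisfies $\pi_{i_a}<\pi_{i_b}\iff\tau_a<\tau_b$; $S_n(\tau,\rho)$ is the set of permutations in $S_n$ avoiding both $\tau$ and $\rho$. $\operatorname{asc}(\pi)$ (resp. $\operatorname{des}(\pi)$) is the number of $i\in[n-1]$ with $\pi_i<\pi_{i+1}$ (resp. $\pi_i>\pi_{i+1}$). $\operatorname{MNA}(\pi)$ is the maximum size of a set $I\subseteq[n-1]$ such that $\pi_i<\pi_{i+1}$ for all $i\in I$ and $|i-j|\ge 2$ for distinct $i,j\in I$; $\operatorname{MND}(\pi)$ is defined analogously with $\pi_i>\pi_{i+1}$. *)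

theory Defs
  imports "HOL-Combinatorics.Combinatorics"
begin

text \<open>Permutations of [n] are represented as lists (one-line notation),
  positions are 0-indexed.\<close>

definition perms :: "nat \<Rightarrow> nat list set" where
  "perms n = permutations_of_set {1..n}"

definition contains :: "nat list \<Rightarrow> nat list \<Rightarrow> bool" where
  "contains p tau \<longleftrightarrow> (\<exists>idx. length idx = length tau \<and> sorted_wrt (<) idx \<and>
      (\<forall>i\<in>set idx. i < length p) \<and>
      (\<forall>a<length tau. \<forall>b<length tau.
          (p ! (idx ! a) < p ! (idx ! b)) \<longleftrightarrow> (tau ! a < tau ! b)))"

definition avoids :: "nat list \<Rightarrow> nat list \<Rightarrow> bool" where
  "avoids p tau \<longleftrightarrow> \<not> contains p tau"

definition av2 :: "nat \<Rightarrow> nat list \<Rightarrow> nat list \<Rightarrow> nat list set" where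
  "av2 n tau rho = {p \<in> perms n. avoids p tau \<and> avoids p rho}"

definition asc :: "nat list \<Rightarrow> nat" where
  "asc p = card {i. i + 1 < length p \<and> p ! i < p ! (i + 1)}"

definition des :: "nat list \<Rightarrow> nat" where
  "des p = card {i. i + 1 < length p \<and> p ! i > p ! (i + 1)}"

definition MNA :: "nat list \<Rightarrow> nat" where
  "MNA p = Max (card ` {I. I \<subseteq> {i. i + 1 < length p} \<and>
      (\<forall>i\<in>I. p ! i < p ! (i + 1)) \<and>
      (\<forall>i\<in>I. \<forall>j\<in>I. i \<noteq> j \<longrightarrow> 2 \<le> (if i \<le> j then j - i else i - j))})"

definition MND :: "nat list \<Rightarrow> nat" where
  "MND p = Max (card ` {I. I \<subseteq> {i. i + 1 < length p} \<and>
      (\<forall>i\<in>I. p ! i > p ! (i + 1)) \<and>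
      (\<forall>i\<in>I. \<forall>j\<in>I. i \<noteq> j \<longrightarrow> 2 \<le> (if i \<le> j then j - i else i - j))})"

end

theory Submission
  imports Defs
begin

lemma rev_nth_pair:
  assumes "i + 1 < length p"
  shows "rev p ! i = p ! ((length p - 2 - i) + 1)"
    and "rev p ! (i + 1) = p ! (length p - 2 - i)"
  using assms by (auto simp: rev_nth intro!: arg_cong[where f="(!) p"])

lemma refl_dist:
  fixes i j n :: nat
  assumes "i + 1 < n" "j + 1 < n"
  shows "(if (n-2-i) \<le> (n-2-j) then (n-2-j) - (n-2-i) else (n-2-i) - (n-2-j))
       = (if i \<le> j then j - i else i - j)"
  using assms by auto

lemma refl_inv: "i + 1 < (n::nat) \<Longrightarrow> n - 2 - (n - 2 - i) = i" by auto

lemma fam_map: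
  fixes R :: "nat \<Rightarrow> nat \<Rightarrow> bool"
  assumes I: "I \<subseteq> {i. i + 1 < length p}" "\<forall>i\<in>I. R (rev p ! i) (rev p ! (i + 1))"
     "\<forall>i\<in>I. \<forall>j\<in>I. i \<noteq> j \<longrightarrow> 2 \<le> (if i \<le> j then j - i else i - j)"
  shows "(\<lambda>i. length p - 2 - i) ` I \<subseteq> {i. i + 1 < length (p)} \<and>
      (\<forall>i\<in>(\<lambda>i. length p - 2 - i) ` I. R (p ! (i + 1)) (p ! i)) \<and>
      (\<forall>i\<in>(\<lambda>i. length p - 2 - i) ` I. \<forall>j\<in>(\<lambda>i. length p - 2 - i) ` I. i \<noteq> j \<longrightarrow> 2 \<le> (if i \<le> j then j - i else i - j))"
proof (intro conjI ballI impI)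
  show "(\<lambda>i. length p - 2 - i) ` I \<subseteq> {i. i + 1 < length p}" using I(1) by auto
next
  fix x assume "x \<in> (\<lambda>i. length p - 2 - i) ` I"
  then obtain i where "i \<in> I" "x = length p - 2 - i" by auto
  moreover have "i + 1 < length p" using I(1) calculation by auto
  ultimately show "R (p ! (x+1)) (p ! x)" using I(2) rev_nth_pair[of i p] by metis
next
  fix x y assume "x \<in> (\<lambda>i. length p - 2 - i) ` I" "y \<in> (\<lambda>i. length p - 2 - i) ` I"
    "x \<noteq> y"
  then obtain i j where h: "i \<in> I" "x = length p - 2 - i" "j \<in> I" "y = length p - 2 - j"
    by auto
  have b: "i + 1 < length p" "j + 1 < length p" using I(1) h by auto
  have "i \<noteq> j" using h \<open>x \<noteq> y\<close> by auto
  then have d: "2 \<le> (if i \<le> j then j - i else i - j)" using I(3) h by blast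
  show "2 \<le> (if x \<le> y then y - x else x - y)"
    using d h b by (simp split: if_splits; linarith)
qed

definition fam :: "(nat \<Rightarrow> nat \<Rightarrow> bool) \<Rightarrow> nat list \<Rightarrow> nat set set" where
  "fam R q = {I. I \<subseteq> {i. i + 1 < length q} \<and>
      (\<forall>i\<in>I. R (q ! i) (q ! (i + 1))) \<and>
      (\<forall>i\<in>I. \<forall>j\<in>I. i \<noteq> j \<longrightarrow> 2 \<le> (if i \<le> j then j - i else i - j))}"

lemma MNA_fam: "MNA q = Max (card ` fam (<) q)"
  unfolding MNA_def fam_def by simp

lemma MND_fam: "MND q = Max (card ` fam (\<lambda>a b. b < a) q)"
  unfolding MND_def fam_def by simp

lemma inj_refl: "I \<subseteq> {i. i + 1 < (n::nat)} \<Longrightarrow> inj_on (\<lambda>i. n - 2 - i) I"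
  unfolding inj_on_def by (metis (mono_tags, lifting) diff_diff_cancel mem_Collect_eq refl_inv subsetD)

lemma fam_sub: "card ` fam R (rev p) \<subseteq> card ` fam (\<lambda>a b. R b a) p"
proof
  fix c assume "c \<in> card ` fam R (rev p)"
  then obtain I where I: "I \<in> fam R (rev p)" "c = card I" by auto
  have "(\<lambda>i. length p - 2 - i) ` I \<in> fam (\<lambda>a b. R b a) p"
    using fam_map[of I p R] I(1) unfolding fam_def by auto
  moreover have "card ((\<lambda>i. length p - 2 - i) ` I) = card I"
    using I(1) inj_refl[of I "length p"] card_image unfolding fam_def by auto
  ultimately show "c \<in> card ` fam (\<lambda>a b. R b a) p" using I(2) by (metis image_eqI)
qed

lemma fam_eq: "card ` fam R (rev p) = card ` fam (\<lambda>a b. R b a) p"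
  using fam_sub[of R p] fam_sub[of "\<lambda>a b. R b a" "rev p"] by auto

lemma MNA_rev: "MNA (rev p) = MND p"
  unfolding MNA_fam MND_fam fam_eq by simp

lemma MND_rev: "MND (rev p) = MNA p"
  unfolding MNA_fam MND_fam fam_eq by simp

definition cnt :: "(nat \<Rightarrow> nat \<Rightarrow> bool) \<Rightarrow> nat list \<Rightarrow> nat" where
  "cnt R q = card {i. i + 1 < length q \<and> R (q ! i) (q ! (i + 1))}"

lemma cnt_le: "cnt R (rev p) \<le> cnt (\<lambda>a b. R b a) p"
  unfolding cnt_def
proof (rule card_inj_on_le[where f="\<lambda>i. length p - 2 - i"])
  show "inj_on (\<lambda>i. length p - 2 - i) {i. i + 1 < length (rev p) \<and> R (rev p ! i) (rev p ! (i + 1))}"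
    by (rule inj_refl) auto
  show "(\<lambda>i. length p - 2 - i) ` {i. i + 1 < length (rev p) \<and> R (rev p ! i) (rev p ! (i + 1))}
    \<subseteq> {i. i + 1 < length p \<and> R (p ! (i + 1)) (p ! i)}"
    using rev_nth_pair by fastforce
  show "finite {i. i + 1 < length p \<and> R (p ! (i + 1)) (p ! i)}" by (rule finite_subset[of _ "{..<length p}"]) auto
qed

lemma cnt_eq: "cnt R (rev p) = cnt (\<lambda>a b. R b a) p"
  using cnt_le[of R p] cnt_le[of "\<lambda>a b. R b a" "rev p"] by auto

lemma asc_rev: "asc (rev p) = des p"
  using cnt_eq[of "(<)" p] unfolding cnt_def asc_def des_def by simp

lemma des_rev: "des (rev p) = asc p"
  using cnt_eq[of "\<lambda>a b. b < a" p] unfolding cnt_def asc_def des_def by simp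

lemma all_less_3: "(\<forall>a<(3::nat). P a) \<longleftrightarrow> P 0 \<and> P 1 \<and> P 2"
  by (auto simp: numeral_3_eq_3 numeral_2_eq_2 less_Suc_eq)

lemma len3: "length idx = 3 \<longleftrightarrow> (\<exists>i j k. idx = [i, j, k])"
  by (auto simp: numeral_3_eq_3 length_Suc_conv)

lemma contains3:
  assumes "distinct [x, y, z::nat]"
  shows "contains p [x, y, z] \<longleftrightarrow> (\<exists>i j k. i < j \<and> j < k \<and> k < length p \<and>
     (\<forall>a<3. \<forall>b<3. (p ! ([i,j,k] ! a) < p ! ([i,j,k] ! b)) \<longleftrightarrow> ([x,y,z] ! a < [x,y,z] ! b)))"
  unfolding contains_def
proof
  assume "\<exists>idx. length idx = length [x, y, z] \<and> sorted_wrt (<) idx \<and>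
      (\<forall>i\<in>set idx. i < length p) \<and>
      (\<forall>a<length [x, y, z]. \<forall>b<length [x, y, z].
          (p ! (idx ! a) < p ! (idx ! b)) \<longleftrightarrow> ([x, y, z] ! a < [x, y, z] ! b))"
  then obtain idx where h: "length idx = length [x,y,z]" "sorted_wrt (<) idx" "\<forall>i\<in>set idx. i < length p"
    "(\<forall>a<length [x,y,z]. \<forall>b<length [x,y,z].
          (p ! (idx ! a) < p ! (idx ! b)) \<longleftrightarrow> ([x, y, z] ! a < [x, y, z] ! b))" by auto
  then obtain i j k where "idx = [i,j,k]" using len3[of idx] by auto
  then show "\<exists>i j k. i < j \<and> j < k \<and> k < length p \<and>
     (\<forall>a<3. \<forall>b<3. (p ! ([i,j,k] ! a) < p ! ([i,j,k] ! b)) \<longleftrightarrow> ([x,y,z] ! a < [x,y,z] ! b))"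
    using h by (auto simp: numeral_3_eq_3)
next
  assume "\<exists>i j k. i < j \<and> j < k \<and> k < length p \<and>
     (\<forall>a<3. \<forall>b<3. (p ! ([i,j,k] ! a) < p ! ([i,j,k] ! b)) \<longleftrightarrow> ([x,y,z] ! a < [x,y,z] ! b))"
  then obtain i j k where h: "i < j" "j < k" "k < length p" 
     "(\<forall>a<3. \<forall>b<3. (p ! ([i,j,k] ! a) < p ! ([i,j,k] ! b)) \<longleftrightarrow> ([x,y,z] ! a < [x,y,z] ! b))"
    by blast
  show "\<exists>idx. length idx = length [x, y, z] \<and> sorted_wrt (<) idx \<and>
      (\<forall>i\<in>set idx. i < length p) \<and>
      (\<forall>a<length [x, y, z]. \<forall>b<length [x, y, z].
          (p ! (idx ! a) < p ! (idx ! b)) \<longleftrightarrow> ([x, y, z] ! a < [x, y, z] ! b))"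
    by (rule exI[of _ "[i,j,k]"]) (use h in auto)
qed

lemma c213: "contains p [2,1,3] \<longleftrightarrow> (\<exists>i j k. i < j \<and> j < k \<and> k < length p \<and>
    p ! j < p ! i \<and> p ! i < p ! k)"
  apply (subst contains3) apply simp
  apply (simp add: all_less_3)
  apply (rule iffI)
   apply blast
  apply (elim exE conjE)
  subgoal for i j k by (rule exI[of _ i], rule exI[of _ j], auto intro!: exI[of _ k])
  done

lemma c312: "contains p [3,1,2] \<longleftrightarrow> (\<exists>i j k. i < j \<and> j < k \<and> k < length p \<and>
    p ! j < p ! k \<and> p ! k < p ! i)"
  apply (subst contains3) apply simp
  apply (simp add: all_less_3)
  apply (rule iffI)
   apply blast
  apply (elim exE conjE)
  subgoal for i j k by (rule exI[of _ i], rule exI[of _ j], auto intro!: exI[of _ k])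
  done

lemma rev_c213_imp: "contains (rev p) [2,1,3] \<Longrightarrow> contains p [3,1,2]"
proof -
  assume "contains (rev p) [2,1,3]"
  then obtain i j k where h: "i < j" "j < k" "k < length p"
    "rev p ! j < rev p ! i" "rev p ! i < rev p ! k" unfolding c213 by auto
  let ?n = "length p"
  have e: "rev p ! i = p ! (?n - Suc i)" "rev p ! j = p ! (?n - Suc j)" "rev p ! k = p ! (?n - Suc k)"
    using h by (auto simp: rev_nth)
  show ?thesis unfolding c312
    by (rule exI[of _ "?n - Suc k"], rule exI[of _ "?n - Suc j"], rule exI[of _ "?n - Suc i"])
      (use h e in auto)
qed

lemma c312_imp_rev: "contains p [3,1,2] \<Longrightarrow> contains (rev p) [2,1,3]"
proof -
  assume "contains p [3,1,2]"
  then obtain i j k where h: "i < j" "j < k" "k < length p"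
    "p ! j < p ! k" "p ! k < p ! i" unfolding c312 by auto
  let ?n = "length p"
  have e: "rev p ! (?n - Suc k) = p ! k" "rev p ! (?n - Suc j) = p ! j" "rev p ! (?n - Suc i) = p ! i"
    using h by (auto simp: rev_nth Suc_diff_Suc)
  show ?thesis unfolding c213
    by (rule exI[of _ "?n - Suc k"], rule exI[of _ "?n - Suc j"], rule exI[of _ "?n - Suc i"])
      (use h e in auto)
qed

lemma rev_c213: "contains (rev p) [2,1,3] \<longleftrightarrow> contains p [3,1,2]"
  using rev_c213_imp c312_imp_rev by blast

lemma rev_c312: "contains (rev p) [3,1,2] \<longleftrightarrow> contains p [2,1,3]"
  using rev_c213[of "rev p"] by simp

lemma rev_av2: "p \<in> av2 n [2,1,3] [3,1,2] \<Longrightarrow> rev p \<in> av2 n [2,1,3] [3,1,2]"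
proof -
  assume a: "p \<in> av2 n [2,1,3] [3,1,2]"
  have "rev p \<in> perms n" using a unfolding av2_def perms_def by (auto simp: permutations_of_set_def)
  moreover have "\<not> contains (rev p) [2,1,3]" "\<not> contains (rev p) [3,1,2]"
    unfolding rev_c213 rev_c312 using a unfolding av2_def avoids_def by auto
  ultimately show ?thesis unfolding av2_def avoids_def by blast
qed

theorem theorem14:
  fixes n :: nat and t1 t2 t3 t4 :: "'a :: comm_semiring_1"
  shows "(\<Sum>\<pi>\<in>av2 n [2,1,3] [3,1,2].
            t1 ^ asc \<pi> * t2 ^ des \<pi> * t3 ^ MNA \<pi> * t4 ^ MND \<pi>)
       = (\<Sum>\<pi>\<in>av2 n [2,1,3] [3,1,2].
            t1 ^ des \<pi> * t2 ^ asc \<pi> * t3 ^ MND \<pi> * t4 ^ MNA \<pi>)"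
  apply (rule sum.reindex_bij_witness[where i=rev and j=rev])
  apply (rule rev_rev_ident | erule rev_av2)+
  by (simp add: asc_rev des_rev MNA_rev MND_rev)

end
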